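(* Let $\mathcal{A}$ be a pOC with state set $Q$ whose underlying chain $\mathcal{X}$ is strongly connected, with trend $t>0$. Let $v$ be a potential and $|v|=v_{\max}-v_{\min}$. Let $$a:=\exp\left(-\frac{t^2}{2(|v|+t+1)^2}\right),$$ so that $0<a<1$. Let $c^{(0)}\ge|v|$ be an integer. Then $$[p^{(0)}(c^{(0)}){\downarrow}]\le\frac{a^{c^{(0)}}}{1-a}\quad\text{for all } p^{(0)}\in Q.$$ Moreover, if $c^{(0)}\ge6(|v|+t+1)^3/t^3$, then $[p^{(0)}(c^{(0)}){\downarrow}]\le1/2$ for all $p^{(0)}\in Q$.
   Context: A pOC is $\mathcal{A}=(Q,\delta^{=0},\delta^{>0},P^{=0},P^{>0})$ with the following components. - $\delta^{>0}\subseteq Q\times\{-1,0,1\}\times Q$ are the positive rules and $\delta^{=0}\subseteq Q\times\{0,1\}\times Q$ are the zero rules. Every state has both kinds of outgoing rule. - $P^{>0}$ and $P^{=0}$ are positive probability distributions over the outgoing rules of each state. $\mathcal{M}_\mathcal{A}$ is the Markov chain on configurations $p(i)$ with the following transitions: - $p(0)\to q(c)$ with probability $P^{=0}(p,c,q)$; - for $i\ge1$, $p(i)\to q(i+c)$ with probability $P^{>0}(p,c,q)$. $[r(c){\downarrow}]$ is the probability that a run initiated in $r(c)$ eventually reaches counter value zero. $\mathcal{X}$ is the finite Markov chain on $Q$ with transition matrix $A_{pq}=\sum_cP^{>0}(p,c,q)$. With $\alpha$ its invariant distribution and $s_p=\sum_{(p,c,q)\in\delta^{>0}}P^{>0}(p,c,q)c$,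 the trend is $t=\alpha s$. A potential is $v\in\mathbb{R}^Q$ with $s+Av=v+\mathbf{1}t$. $v_{\max}$ and $v_{\min}$ are its largest and smallest components. *)

theory Defs
  imports Complex_Main
begin

text \<open>Rules are encoded by their probabilities:
  Pz p c q = P^{=0}(p,c,q) and Pp p c q = P^{>0}(p,c,q); the rule sets are the supports
  (delta = {(p,c,q). P(p,c,q) > 0}).\<close>

definition pOC :: "('q::finite \<Rightarrow> int \<Rightarrow> 'q \<Rightarrow> real) \<Rightarrow> ('q \<Rightarrow> int \<Rightarrow> 'q \<Rightarrow> real) \<Rightarrow> bool" where
  "pOC Pz Pp \<longleftrightarrow>
     (\<forall>p c q. Pz p c q \<ge> 0 \<and> (Pz p c q \<noteq> 0 \<longrightarrow> c \<in> {0, 1})) \<and>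
     (\<forall>p c q. Pp p c q \<ge> 0 \<and> (Pp p c q \<noteq> 0 \<longrightarrow> c \<in> {-1, 0, 1})) \<and>
     (\<forall>p. (\<Sum>q\<in>UNIV. \<Sum>c\<in>{0, 1}. Pz p c q) = 1) \<and>
     (\<forall>p. (\<Sum>q\<in>UNIV. \<Sum>c\<in>{-1, 0, 1}. Pp p c q) = 1)"

definition trans_mat :: "('q::finite \<Rightarrow> int \<Rightarrow> 'q \<Rightarrow> real) \<Rightarrow> 'q \<Rightarrow> 'q \<Rightarrow> real" where
  "trans_mat Pp p q = (\<Sum>c\<in>{-1, 0, 1}. Pp p c q)"

definition drift :: "('q::finite \<Rightarrow> int \<Rightarrow> 'q \<Rightarrow> real) \<Rightarrow> 'q \<Rightarrow> real" where
  "drift Pp p = (\<Sum>q\<in>UNIV. \<Sum>c\<in>{-1, 0, 1}. Pp p c q * of_int c)"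

definition strongly_connected :: "('q::finite \<Rightarrow> 'q \<Rightarrow> real) \<Rightarrow> bool" where
  "strongly_connected A \<longleftrightarrow> (\<forall>p q. (p, q) \<in> {(x, y). A x y > 0}\<^sup>*)"

definition invariant_dist :: "('q::finite \<Rightarrow> 'q \<Rightarrow> real) \<Rightarrow> ('q \<Rightarrow> real) \<Rightarrow> bool" where
  "invariant_dist A \<alpha> \<longleftrightarrow> (\<forall>p. \<alpha> p \<ge> 0) \<and> (\<Sum>p\<in>UNIV. \<alpha> p) = 1 \<and>
     (\<forall>q. (\<Sum>p\<in>UNIV. \<alpha> p * A p q) = \<alpha> q)"

definition trend :: "('q::finite \<Rightarrow> int \<Rightarrow> 'q \<Rightarrow> real) \<Rightarrow> ('q \<Rightarrow> real) \<Rightarrow> real" where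
  "trend Pp \<alpha> = (\<Sum>p\<in>UNIV. \<alpha> p * drift Pp p)"

definition potential :: "('q::finite \<Rightarrow> int \<Rightarrow> 'q \<Rightarrow> real) \<Rightarrow> real \<Rightarrow> ('q \<Rightarrow> real) \<Rightarrow> bool" where
  "potential Pp t v \<longleftrightarrow> (\<forall>p. drift Pp p + (\<Sum>q\<in>UNIV. trans_mat Pp p q * v q) = v p + t)"

text \<open>Probability that a run of M_A from p(i) has reached counter value 0 within n steps
  (time 0 included). Before reaching 0 only positive rules are used.\<close>
fun hit_within :: "('q::finite \<Rightarrow> int \<Rightarrow> 'q \<Rightarrow> real) \<Rightarrow> nat \<Rightarrow> 'q \<Rightarrow> nat \<Rightarrow> real" where
  "hit_within Pp 0 p i = (if i = 0 then 1 else 0)"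
| "hit_within Pp (Suc n) p i = (if i = 0 then 1 else
     (\<Sum>q\<in>UNIV. \<Sum>c\<in>{-1, 0, 1}. Pp p c q * hit_within Pp n q (nat (int i + c))))"

text \<open>[p(i)\<down>]: probability of eventually reaching counter value zero
  (= limit of the increasing sequence of n-step hitting probabilities).\<close>
definition reach_zero :: "('q::finite \<Rightarrow> int \<Rightarrow> 'q \<Rightarrow> real) \<Rightarrow> 'q \<Rightarrow> nat \<Rightarrow> real" where
  "reach_zero Pp p i = (SUP n. hit_within Pp n p i)"

end

theory Submission
  imports Defs
begin

lemma exp_quad: fixes y :: real assumes "y \<le> 1" shows "exp y \<le> 1 + y + y\<^sup>2"
proof (cases "y \<ge> 0")
  case True thus ?thesis using exp_bound assms by blast
next
  case False
  define z where "z = -y"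
  have z: "z \<ge> 0" using False z_def by auto
  have e: "exp z \<ge> 1 + z" using exp_ge_add_one_self by blast
  have sq: "1 - z + z\<^sup>2 = (z - 1/2)\<^sup>2 + 3/4" by (simp add: power2_eq_square algebra_simps)
  have pos: "1 - z + z\<^sup>2 > 0" unfolding sq using zero_le_power2[of "z - 1/2"] by linarith
  have "(1 - z + z\<^sup>2) * exp z \<ge> (1 - z + z\<^sup>2) * (1 + z)"
    using e pos by (simp add: mult_left_mono)
  moreover have "(1 - z + z\<^sup>2) * (1 + z) = 1 + z^3" by (simp add: algebra_simps power2_eq_square power3_eq_cube)
  moreover have "z^3 \<ge> 0" using z by simp
  ultimately have "(1 - z + z\<^sup>2) * exp z \<ge> 1" by linarith
  hence "exp (-z) \<le> 1 - z + z\<^sup>2"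
    by (simp add: exp_minus field_simps)
  thus ?thesis using z_def by simp
qed

lemma step_bound:
  fixes Pz Pp :: "'q::finite \<Rightarrow> int \<Rightarrow> 'q \<Rightarrow> real" and v :: "'q \<Rightarrow> real"
  assumes poc: "pOC Pz Pp" and pot: "potential Pp t v"
    and b0: "0 \<le> b" and bM: "b * M \<le> 1" and bM2: "b * M\<^sup>2 \<le> t"
    and vd: "\<And>p q. \<bar>v q - v p\<bar> \<le> M - 1"
  shows "(\<Sum>q\<in>UNIV. \<Sum>c\<in>{-1,0,1}. Pp p c q * exp (- b * (of_int c + v q - v p))) \<le> 1"
proof -
  have nn: "\<And>c q. Pp p c q \<ge> 0" using poc unfolding pOC_def by blast
  have sum1: "(\<Sum>q\<in>UNIV. \<Sum>c\<in>{-1,0,1}. Pp p c q) = 1" using poc unfolding pOC_def by blast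
  have M1: "M \<ge> 1" using vd[of p p] by simp
  have tm: "Pp p c q * exp (- b * (of_int c + v q - v p))
      \<le> Pp p c q * (1 - b * (of_int c + v q - v p) + b\<^sup>2 * M\<^sup>2)" if "c \<in> {-1,0,1}" for c q
  proof -
    define X where "X = of_int c + v q - v p"
    have cb: "\<bar>of_int c :: real\<bar> \<le> 1" using that by auto
    have XM: "\<bar>X\<bar> \<le> M" using vd[of p q] cb unfolding X_def by linarith
    have "\<bar>- b * X\<bar> \<le> b * M" using XM b0 by (simp add: abs_mult mult_left_mono)
    hence "- b * X \<le> 1" using bM by linarith
    hence "exp (- b * X) \<le> 1 + (- b * X) + (- b * X)\<^sup>2" by (rule exp_quad)
    also have "(- b * X)\<^sup>2 \<le> b\<^sup>2 * M\<^sup>2"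
    proof -
      have "(- b * X)\<^sup>2 = \<bar>- b * X\<bar>\<^sup>2" by simp
      also have "\<dots> \<le> (b*M)\<^sup>2" by (rule power_mono[OF \<open>\<bar>- b * X\<bar> \<le> b * M\<close>]) simp
      finally show ?thesis by (simp add: power_mult_distrib)
    qed
    finally have "exp (- b * X) \<le> 1 - b * X + b\<^sup>2 * M\<^sup>2" by simp
    thus ?thesis unfolding X_def using nn by (simp add: mult_left_mono)
  qed
  have "(\<Sum>q\<in>UNIV. \<Sum>c\<in>{-1,0,1}. Pp p c q * exp (- b * (of_int c + v q - v p)))
      \<le> (\<Sum>q\<in>UNIV. \<Sum>c\<in>{-1,0,1}. Pp p c q * (1 - b * (of_int c + v q - v p) + b\<^sup>2 * M\<^sup>2))"
    by (intro sum_mono tm)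
  also have "\<dots> = (\<Sum>q\<in>UNIV. \<Sum>c\<in>{-1,0,1}. (1 + b\<^sup>2 * M\<^sup>2 + b * v p) * Pp p c q
        - b * (Pp p c q * of_int c) - b * (Pp p c q * v q))"
    by (intro sum.cong refl) (simp add: algebra_simps)
  also have "\<dots> = (1 + b\<^sup>2 * M\<^sup>2 + b * v p) * (\<Sum>q\<in>UNIV. \<Sum>c\<in>{-1,0,1}. Pp p c q)
        - b * (\<Sum>q\<in>UNIV. \<Sum>c\<in>{-1,0,1}. Pp p c q * of_int c)
        - b * (\<Sum>q\<in>UNIV. \<Sum>c\<in>{-1,0,1}. Pp p c q * v q)"
    by (simp only: sum_subtractf sum_distrib_left)
  also have "(\<Sum>q\<in>UNIV. \<Sum>c\<in>{-1,0,1}. Pp p c q * v q) = (\<Sum>q\<in>UNIV. trans_mat Pp p q * v q)"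
    unfolding trans_mat_def by (simp only: sum_distrib_right)
  also have "(\<Sum>q\<in>UNIV. \<Sum>c\<in>{-1,0,1}. Pp p c q * of_int c) = drift Pp p"
    unfolding drift_def ..
  also have "(1 + b\<^sup>2 * M\<^sup>2 + b * v p) * (\<Sum>q\<in>UNIV. \<Sum>c\<in>{-1,0,1}. Pp p c q)
        - b * drift Pp p - b * (\<Sum>q\<in>UNIV. trans_mat Pp p q * v q) = 1 + b\<^sup>2 * M\<^sup>2 - b * t"
  proof -
    have "drift Pp p + (\<Sum>q\<in>UNIV. trans_mat Pp p q * v q) = v p + t"
      using pot unfolding potential_def by blast
    hence "b * drift Pp p + b * (\<Sum>q\<in>UNIV. trans_mat Pp p q * v q) = b * v p + b * t"
      by (metis distrib_left)
    thus ?thesis using sum1 by (simp add: algebra_simps)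
  qed
  also have "\<dots> \<le> 1"
  proof -
    have "b * (b * M\<^sup>2) \<le> b * t" using bM2 b0 by (simp add: mult_left_mono)
    thus ?thesis by (simp add: power2_eq_square algebra_simps)
  qed
  finally show ?thesis .
qed

lemma hit_bound:
  fixes Pp :: "'q::finite \<Rightarrow> int \<Rightarrow> 'q \<Rightarrow> real" and v :: "'q \<Rightarrow> real"
  assumes step: "\<And>p. (\<Sum>q\<in>UNIV. \<Sum>c\<in>{-1,0,1}. Pp p c q * exp (- b * (of_int c + v q - v p))) \<le> 1"
    and nn: "\<And>p c q. Pp p c q \<ge> 0" and vmax: "\<And>p. v p \<le> V" and b0: "b \<ge> 0"
  shows "hit_within Pp n p i \<le> exp (- b * (real i + v p - V))"
proof (induction n arbitrary: p i)
  case 0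
  have "b * (v p - V) \<le> 0" using b0 vmax[of p] by (simp add: mult_nonneg_nonpos)
  hence "1 \<le> exp (- b * (real 0 + v p - V))" by simp
  thus ?case by simp
next
  case (Suc n)
  show ?case
  proof (cases "i = 0")
    case True
    have "b * (v p - V) \<le> 0" using b0 vmax[of p] by (simp add: mult_nonneg_nonpos)
    hence "1 \<le> exp (- b * (real 0 + v p - V))" by simp
    thus ?thesis using True by simp
  next
    case False
    define E where "E = exp (- b * (real i + v p - V))"
    have "hit_within Pp (Suc n) p i = (\<Sum>q\<in>UNIV. \<Sum>c\<in>{-1, 0, 1}. Pp p c q * hit_within Pp n q (nat (int i + c)))"
      using False by simp
    also have "\<dots> \<le> (\<Sum>q\<in>UNIV. \<Sum>c\<in>{-1, 0, 1}. Pp p c q * exp (- b * (real (nat (int i + c)) + v q - V)))"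
      by (intro sum_mono mult_left_mono Suc nn)
    also have "\<dots> = (\<Sum>q\<in>UNIV. \<Sum>c\<in>{-1, 0, 1}. E * (Pp p c q * exp (- b * (of_int c + v q - v p))))"
    proof (intro sum.cong refl)
      fix q c assume c: "c \<in> {-1, 0, 1::int}"
      have "real (nat (int i + c)) = real i + of_int c" using c False by auto
      hence "exp (- b * (real (nat (int i + c)) + v q - V)) = E * exp (- b * (of_int c + v q - v p))"
        unfolding E_def mult_exp_exp by (simp add: algebra_simps)
      thus "Pp p c q * exp (- b * (real (nat (int i + c)) + v q - V)) = E * (Pp p c q * exp (- b * (of_int c + v q - v p)))"
        by simp
    qed
    also have "\<dots> = E * (\<Sum>q\<in>UNIV. \<Sum>c\<in>{-1,0,1}. Pp p c q * exp (- b * (of_int c + v q - v p)))"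
      by (simp only: sum_distrib_left)
    also have "\<dots> \<le> E * 1" using step[of p] E_def by (intro mult_left_mono) auto
    finally show ?thesis unfolding E_def by simp
  qed
qed


theorem mainTheorem15:
  fixes Pz Pp :: "'q::finite \<Rightarrow> int \<Rightarrow> 'q \<Rightarrow> real"
    and \<alpha> v :: "'q \<Rightarrow> real" and t :: real and c0 :: nat
  assumes "pOC Pz Pp"
    and "strongly_connected (trans_mat Pp)"
    and "invariant_dist (trans_mat Pp) \<alpha>"
    and "t = trend Pp \<alpha>"
    and "t > 0"
    and "potential Pp t v"
    and "real c0 \<ge> Max (range v) - Min (range v)"
  shows "(\<forall>p0. reach_zero Pp p0 c0 \<le>
            exp (- (t\<^sup>2 / (2 * (Max (range v) - Min (range v) + t + 1)\<^sup>2))) ^ c0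
            / (1 - exp (- (t\<^sup>2 / (2 * (Max (range v) - Min (range v) + t + 1)\<^sup>2)))))
       \<and> (real c0 \<ge> 6 * (Max (range v) - Min (range v) + t + 1) ^ 3 / t ^ 3 \<longrightarrow>
            (\<forall>p0. reach_zero Pp p0 c0 \<le> 1 / 2))"
proof -
  note poc = assms(1) and inv = assms(3) and tdef = assms(4) and tpos = assms(5)
    and pot = assms(6) and c0d = assms(7)
  define V where "V = Max (range v)"
  define W where "W = Min (range v)"
  define d where "d = V - W"
  define K where "K = V - W + t + 1"
  define \<beta> where "\<beta> = t\<^sup>2 / (2 * K\<^sup>2)"
  define M where "M = 1 + d"
  have vV: "\<And>p. v p \<le> V" unfolding V_def by (rule Max_ge) auto
  have vW: "\<And>p. W \<le> v p" unfolding W_def by (rule Min_le) auto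
  have d0: "d \<ge> 0" using vV vW unfolding d_def by (meson order_trans diff_ge_0_iff_ge)
  have nn: "\<And>p c q. Pp p c q \<ge> 0" using poc unfolding pOC_def by blast
  have drift1: "drift Pp p \<le> 1" for p
  proof -
    have "drift Pp p \<le> (\<Sum>q\<in>UNIV. \<Sum>c\<in>{-1,0,1}. Pp p c q)"
      unfolding drift_def
    proof (intro sum_mono)
      fix q c assume "c \<in> {-1, 0, 1::int}"
      hence "of_int c \<le> (1::real)" by auto
      thus "Pp p c q * of_int c \<le> Pp p c q" using nn[of p c q] by (simp add: mult_left_le)
    qed
    also have "\<dots> = 1" using poc unfolding pOC_def by blast
    finally show ?thesis .
  qed
  have t1: "t \<le> 1"
  proof -
    have "t = (\<Sum>p\<in>UNIV. \<alpha> p * drift Pp p)" using tdef unfolding trend_def .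
    also have "\<dots> \<le> (\<Sum>p\<in>UNIV. \<alpha> p)"
      using inv drift1 unfolding invariant_dist_def by (intro sum_mono) (simp add: mult_left_le)
    also have "\<dots> = 1" using inv unfolding invariant_dist_def by blast
    finally show ?thesis .
  qed
  have Kd: "K = d + t + 1" unfolding K_def d_def by simp
  have KM: "K \<ge> M" "M \<ge> 1" "K \<ge> 1" "K \<ge> 2 * t" "K > t" using d0 tpos t1 unfolding Kd M_def by auto
  have Kpos: "K > 0" using KM by simp
  have \<beta>pos: "\<beta> > 0" unfolding \<beta>_def using tpos Kpos by simp
  have t2: "t\<^sup>2 \<le> 1" using tpos t1 by (simp add: power_le_one)
  have MK2: "M\<^sup>2 \<le> K\<^sup>2" using KM by (simp add: power_mono)
  have MM2: "M \<le> M\<^sup>2" using KM by (simp add: power2_eq_square)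
  have bM: "\<beta> * M \<le> 1"
  proof -
    have "t\<^sup>2 * M \<le> 1 * M" using t2 KM by (intro mult_right_mono) auto
    hence "t\<^sup>2 * M \<le> 2 * K\<^sup>2" using MM2 MK2 zero_le_power2[of K] by linarith
    thus ?thesis unfolding \<beta>_def using Kpos by (simp add: field_simps)
  qed
  have bM2: "\<beta> * M\<^sup>2 \<le> t"
  proof -
    have "t * M\<^sup>2 \<le> 1 * M\<^sup>2" using t1 by (intro mult_right_mono) auto
    hence "t * M\<^sup>2 \<le> 2 * K\<^sup>2" using MK2 zero_le_power2[of K] by linarith
    hence "t * (t * M\<^sup>2) \<le> t * (2 * K\<^sup>2)" using tpos by (intro mult_left_mono) auto
    thus ?thesis unfolding \<beta>_def using Kpos by (simp add: field_simps power2_eq_square)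
  qed
  have vd: "\<bar>v q - v p\<bar> \<le> M - 1" for p q
    using vV[of p] vV[of q] vW[of p] vW[of q] unfolding M_def d_def by linarith
  have step: "(\<Sum>q\<in>UNIV. \<Sum>c\<in>{-1,0,1}. Pp p c q * exp (- \<beta> * (of_int c + v q - v p))) \<le> 1" for p
    by (rule step_bound[OF poc pot _ bM bM2 vd]) (use \<beta>pos in auto)
  define B where "B = exp (- \<beta> * (real c0 - d))"
  have reach: "reach_zero Pp p0 c0 \<le> B" for p0
  proof -
    have "hit_within Pp n p0 c0 \<le> B" for n
    proof -
      have "hit_within Pp n p0 c0 \<le> exp (- \<beta> * (real c0 + v p0 - V))"
        by (rule hit_bound[OF step nn vV]) (use \<beta>pos in auto)
      also have "\<dots> \<le> B" unfolding B_def d_def using vW[of p0] \<beta>pos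
        by (simp add: mult_left_mono)
      finally show ?thesis .
    qed
    thus ?thesis unfolding reach_zero_def by (intro cSUP_least) auto
  qed
  have \<beta>d: "\<beta> * d \<le> 1"
  proof -
    have "t\<^sup>2 * d \<le> 1 * d" using t2 d0 by (intro mult_right_mono) auto
    moreover have "d \<le> K" using Kd tpos by simp
    moreover have "K \<le> K\<^sup>2" using KM by (simp add: power2_eq_square)
    ultimately have "t\<^sup>2 * d \<le> 2 * K\<^sup>2" using Kpos by (smt (verit) zero_le_power2)
    thus ?thesis unfolding \<beta>_def using Kpos by (simp add: field_simps)
  qed
  have \<beta>8: "\<beta> \<le> 1/8"
  proof -
    have "(2*t)\<^sup>2 \<le> K\<^sup>2" using KM tpos by (intro power_mono) auto
    hence "4 * t\<^sup>2 \<le> K\<^sup>2" by (simp add: power_mult_distrib)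
    thus ?thesis unfolding \<beta>_def using Kpos by (simp add: field_simps)
  qed
  define a where "a = exp (- \<beta>)"
  have a_eq: "a = exp (- (t\<^sup>2 / (2 * (Max (range v) - Min (range v) + t + 1)\<^sup>2)))"
    unfolding a_def \<beta>_def K_def V_def W_def ..
  have a1: "1 - a > 0" unfolding a_def using \<beta>pos by simp
  have a2: "1 - a \<le> \<beta>" unfolding a_def using exp_ge_add_one_self[of "-\<beta>"] by simp
  have part1: "reach_zero Pp p0 c0 \<le> a ^ c0 / (1 - a)" for p0
  proof -
    have ac: "a ^ c0 = exp (- \<beta> * real c0)" unfolding a_def
      by (simp add: exp_of_nat_mult[symmetric] mult.commute)
    have Bs: "B = a ^ c0 * exp (\<beta> * d)" unfolding B_def ac mult_exp_exp by (simp add: algebra_simps)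
    have "exp (\<beta> * d) \<le> exp 1" using \<beta>d by simp
    also have "\<dots> \<le> 3" by (rule exp_le)
    finally have e3: "exp (\<beta> * d) \<le> 3" .
    have "exp (\<beta> * d) * (1 - a) \<le> 3 * \<beta>"
      using e3 a1 a2 by (intro mult_mono) auto
    hence ed: "exp (\<beta> * d) * (1 - a) \<le> 1" using \<beta>8 by linarith
    have "B * (1 - a) \<le> a ^ c0"
    proof -
      have "B * (1 - a) = a ^ c0 * (exp (\<beta> * d) * (1 - a))" unfolding Bs by simp
      also have "\<dots> \<le> a ^ c0 * 1" using ed unfolding a_def by (intro mult_left_mono) auto
      finally show ?thesis by simp
    qed
    hence "B \<le> a ^ c0 / (1 - a)" using a1 by (simp add: le_divide_eq)
    thus ?thesis using reach[of p0] by linarith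
  qed
  have part2: "reach_zero Pp p0 c0 \<le> 1/2"
    if hc: "real c0 \<ge> 6 * (Max (range v) - Min (range v) + t + 1) ^ 3 / t ^ 3" for p0
  proof -
    have hc': "real c0 \<ge> 6 * K ^ 3 / t ^ 3" using hc unfolding K_def V_def W_def .
    have "\<beta> * (6 * K ^ 3 / t ^ 3) = 3 * K / t" unfolding \<beta>_def using tpos Kpos
      by (simp add: field_simps power2_eq_square power3_eq_cube)
    also have "\<dots> \<ge> 3" using KM tpos by (simp add: field_simps)
    finally have "\<beta> * real c0 \<ge> 3" using hc' \<beta>pos
      by (meson order_trans mult_left_mono less_imp_le)
    hence ge2: "\<beta> * (real c0 - d) \<ge> 2" using \<beta>d by (simp add: algebra_simps)
    have "exp 2 \<ge> (2::real)" using exp_ge_add_one_self[of 2] by simp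
    have "B \<le> exp (-2)" unfolding B_def using ge2 by simp
    also have "exp (-2::real) = 1 / exp 2" by (simp add: exp_minus field_simps)
    also have "\<dots> \<le> 1/2" using \<open>exp 2 \<ge> 2\<close> by (simp add: field_simps)
    finally show ?thesis using reach[of p0] by linarith
  qed
  show ?thesis using part1 part2 unfolding a_eq by blast
qed

end
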